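(* Let $p\ge 1$ and $q\ge 3$ be integers. Then $\lambda_{\min}(\mathcal U(p,q)^c)$ is the least real root of the polynomial $$\begin{aligned}f(\lambda;p,q)={}&(-8+2p+2q)+(13-11p-7q+4pq)\lambda+(20-6q-4pq)\lambda^2+(-1+11p+7q-7pq)\lambda^3\\&+(-20+12p+12q-2pq)\lambda^4+(-16+6p+6q)\lambda^5+(-6+p+q)\lambda^6-\lambda^7.\end{aligned}$$ In particular $f(-2;p,q)=-10$ and $\lambda_{\min}(\mathcal U(p,q)^c)<-2$.
   Context: All graphs are simple and finite. For a graph $G$, $\lambda_{\min}(G)$ denotes the least eigenvalue of the adjacency matrix $A(G)$, and $G^c$ denotes the complement of $G$. $K_{1,m}$ is the star with $m$ edges; its vertex of degree $m$ is the center and the others are pendant vertices. $S_m^3$ denotes the graph of order $m$ obtained from $K_{1,m-1}$ by adding one edge between two of its pendant vertices. For integers $p\ge 1$, $q\ge 3$, $\mathcal U(p,q)$ is the graph of order $p+q+2$ obtained from disjoint copies of $K_{1,p}$ and $S_{q+1}^3$ by adding one edge joining a pendant vertex of $K_{1,p}$ to a pendant (degree-one) vertex of $S_{q+1}^3$. *)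

theory Defs
  imports "Jordan_Normal_Form.Char_Poly"
begin

text \<open>A simple graph on vertex set {0..<n} is given by a symmetric irreflexive
  edge predicate E on nat (only its restriction to {0..<n} matters).\<close>

definition adj_matrix :: "nat \<Rightarrow> (nat \<Rightarrow> nat \<Rightarrow> bool) \<Rightarrow> real mat" where
  "adj_matrix n E = mat n n (\<lambda>(i,j). if E i j then 1 else 0)"

definition compl_graph :: "(nat \<Rightarrow> nat \<Rightarrow> bool) \<Rightarrow> nat \<Rightarrow> nat \<Rightarrow> bool" where
  "compl_graph E i j \<longleftrightarrow> i \<noteq> j \<and> \<not> E i j"

definition lambda_min :: "nat \<Rightarrow> (nat \<Rightarrow> nat \<Rightarrow> bool) \<Rightarrow> real" where
  "lambda_min n E = Min {k. eigenvalue (adj_matrix n E) k}"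

text \<open>The graph U(p,q) on vertices {0..<p+q+2}:
  0 = centre of K_{1,p}, 1..p its pendant vertices;
  p+1 = centre of S^3_{q+1}, p+2..p+q+1 its pendant vertices, with the extra edge
  between p+2 and p+3; the joining edge goes from pendant 1 of the star to the
  degree-one vertex p+q+1 of S^3_{q+1} (degree one since q \<ge> 3).\<close>
definition U_base_edge :: "nat \<Rightarrow> nat \<Rightarrow> nat \<Rightarrow> nat \<Rightarrow> bool" where
  "U_base_edge p q i j \<longleftrightarrow>
     (i = 0 \<and> 1 \<le> j \<and> j \<le> p) \<or>
     (i = p + 1 \<and> p + 2 \<le> j \<and> j \<le> p + q + 1) \<or>
     (i = p + 2 \<and> j = p + 3) \<or>
     (i = 1 \<and> j = p + q + 1)"

definition U_graph :: "nat \<Rightarrow> nat \<Rightarrow> nat \<Rightarrow> nat \<Rightarrow> bool" where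
  "U_graph p q i j \<longleftrightarrow> U_base_edge p q i j \<or> U_base_edge p q j i"

definition f_poly :: "int \<Rightarrow> int \<Rightarrow> real \<Rightarrow> real" where
  "f_poly p q x =
     (-8 + 2*p + 2*q) + (13 - 11*p - 7*q + 4*p*q) * x + (20 - 6*q - 4*p*q) * x^2
   + (-1 + 11*p + 7*q - 7*p*q) * x^3 + (-20 + 12*p + 12*q - 2*p*q) * x^4
   + (-16 + 6*p + 6*q) * x^5 + (-6 + p + q) * x^6 - x^7"

end

theory Submission
  imports Defs "HOL-Real_Asymp.Real_Asymp"
begin

lemma alg2:
  fixes a b c d e g h S k p q :: real
  assumes E1: "(k+1)*a + c + (p-1)*b - S = 0"
  and E2: "(k+1)*b + a - S = 0"
  and E3: "(k+1)*c + a + h - S = 0"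
  and E4: "(k+1)*d + 2*e + (q-3)*g + h - S = 0"
  and E5: "(k+2)*e + d - S = 0"
  and E6: "(k+1)*g + d - S = 0"
  and E7: "(k+1)*h + d + c - S = 0"
  and E8: "a + (p-1)*b + c + d + 2*e + (q-3)*g + h - S = 0"
shows "((-8 + 2*p + 2*q) + (13 - 11*p - 7*q + 4*p*q) * k + (20 - 6*q - 4*p*q) * k^2 + (-1 + 11*p + 7*q - 7*p*q) * k^3 + (-20 + 12*p + 12*q - 2*p*q) * k^4 + (-16 + 6*p + 6*q) * k^5 + (-6 + p + q) * k^6 - k^7) = 0 \<or> (a = 0 \<and> b = 0 \<and> c = 0 \<and> d = 0 \<and> e = 0 \<and> g = 0 \<and> h = 0 \<and> S = 0)"
proof -
  have "((-8 + 2*p + 2*q) + (13 - 11*p - 7*q + 4*p*q) * k + (20 - 6*q - 4*p*q) * k^2 + (-1 + 11*p + 7*q - 7*p*q) * k^3 + (-20 + 12*p + 12*q - 2*p*q) * k^4 + (-16 + 6*p + 6*q) * k^5 + (-6 + p + q) * k^6 - k^7) * a = ((- 1)*p*q*k^3 + (- 4)*p*q*k^2 + (- 4)*p*q*k + (1)*p*k^5 + (6)*p*k^4 + (13)*p*k^3 + (14)*p*k^2 + (7)*p*k + (- 2)*p + (1)*q*k^5 + (5)*q*k^4 + (8)*q*k^3 + (4)*q*k^2 + (- 1)*q*k + (- 2)*q + (- 1)*k^6 + (- 6)*k^5 + (- 17)*k^4 + (- 24)*k^3 + (- 11)*k^2 + (4)*k + (6)) * ((k+1)*a + c + (p-1)*b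 - S) + ((- 1)*p*q*k^4 + (- 3)*p*q*k^3 + (4)*p*q*k + (- 1)*p*k^4 + (- 2)*p*k^3 + (- 4)*p*k^2 + (- 7)*p*k + (2)*p + (1)*q*k^4 + (3)*q*k^3 + (- 4)*q*k + (1)*k^4 + (2)*k^3 + (4)*k^2 + (7)*k + (- 2)) * ((k+1)*b + a - S) + ((- 1)*p*k^3 + (- 3)*p*k^2 + (- 2)*p*k + (- 1)*q*k^4 + (- 3)*q*k^3 + (- 1)*q*k^2 + (3)*q*k + (2)*q + (2)*k^3 + (1)*k^2 + (- 5)*k + (- 4)) * ((k+1)*c + a + h - S) + ((- 1)*p*q*k^3 + (- 4)*p*q*k^2 + (- 4)*p*q*k + (1)*p*k^4 + (5)*p*k^3 + (10)*p*k^2 + (7)*p*k + (- 2)*p + (1)*q*k^4 + (5)*q*k^3 + (8)*q*k^2 + (3)*q*k + (- 2)*q + (- 1)*k^5 + (- 6)*k^4 + (- 16)*k^3 + (- 20)*k^2 + (- 6)*k + (6)) * ((k+1)*d + 2*e + (q-3)*g + h - S) + ((2)*p*k^4 + (6)*p*k^3 + (4)*p*k^2 + (- 2)*k^5 + (- 8)*k^4 + (- 12)*k^3 + (- 4)*k^2 + (4)*k + (2)) * ((k+2)*e + d - S) + ((1)*p*q*k^4 + (4)*p*q*k^3 + (4)*p*q*k^2 + (- 3)*p*k^4 + (- 12)*p*k^3 + (- 12)*p*k^2 + (- 1)*q*k^5 + (- 5)*q*k^4 + (- 9)*q*k^3 + (- 5)*q*k^2 + (3)*q*k + (2)*q + (3)*k^5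 + (15)*k^4 + (27)*k^3 + (15)*k^2 + (- 9)*k + (- 6)) * ((k+1)*g + d - S) + ((1)*p*k^4 + (4)*p*k^3 + (5)*p*k^2 + (2)*p*k + (1)*q*k^3 + (2)*q*k^2 + (- 1)*q*k + (- 2)*q + (- 1)*k^5 + (- 5)*k^4 + (- 9)*k^3 + (- 7)*k^2 + (4)*k + (6)) * ((k+1)*h + d + c - S) + ((1)*p*q*k^3 + (4)*p*q*k^2 + (4)*p*q*k + (- 1)*p*k^5 + (- 6)*p*k^4 + (- 13)*p*k^3 + (- 14)*p*k^2 + (- 7)*p*k + (2)*p + (- 1)*q*k^4 + (- 5)*q*k^3 + (- 8)*q*k^2 + (- 3)*q*k + (2)*q + (1)*k^6 + (7)*k^5 + (20)*k^4 + (30)*k^3 + (22)*k^2 + (1)*k + (- 8)) * (a + (p-1)*b + c + d + 2*e + (q-3)*g + h - S)" by (Groebner_Basis.algebra)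
  hence za: "((-8 + 2*p + 2*q) + (13 - 11*p - 7*q + 4*p*q) * k + (20 - 6*q - 4*p*q) * k^2 + (-1 + 11*p + 7*q - 7*p*q) * k^3 + (-20 + 12*p + 12*q - 2*p*q) * k^4 + (-16 + 6*p + 6*q) * k^5 + (-6 + p + q) * k^6 - k^7) * a = 0" using assms by simp
  have "((-8 + 2*p + 2*q) + (13 - 11*p - 7*q + 4*p*q) * k + (20 - 6*q - 4*p*q) * k^2 + (-1 + 11*p + 7*q - 7*p*q) * k^3 + (-20 + 12*p + 12*q - 2*p*q) * k^4 + (-16 + 6*p + 6*q) * k^5 + (-6 + p + q) * k^6 - k^7) * b = ((- 1)*q*k^4 + (- 3)*q*k^3 + (4)*q*k + (- 1)*k^4 + (- 2)*k^3 + (- 4)*k^2 + (- 7)*k + (2)) * ((k+1)*a + c + (p-1)*b - S) + ((1)*q*k^5 + (5)*q*k^4 + (5)*q*k^3 + (- 5)*q*k^2 + (- 5)*q*k + (2)*q + (- 1)*k^6 + (- 4)*k^5 + (- 6)*k^4 + (- 2)*k^3 + (12)*k^2 + (8)*k + (- 6)) * ((k+1)*b + a - S) + ((2)*q*k^3 + (5)*q*k^2 + (1)*q*k + (- 2)*q + (- 1)*k^5 + (- 4)*k^4 + (- 5)*k^3 + (- 5)*k^2 + (1)*k + (4)) * ((k+1)*c + a + h - S) + ((1)*q*k^4 + (4)*q*k^3 + (4)*q*k^2 + (- 1)*k^5 + (- 5)*k^4 + (- 11)*k^3 + (- 9)*k^2 + (3)*k + (2)) * ((k+1)*d + 2*e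 + (q-3)*g + h - S) + ((- 2)*k^5 + (- 6)*k^4 + (- 4)*k^3 + (4)*k^2 + (2)*k + (- 2)) * ((k+2)*e + d - S) + ((- 1)*q*k^5 + (- 4)*q*k^4 + (- 4)*q*k^3 + (2)*q*k^2 + (3)*q*k + (- 2)*q + (3)*k^5 + (12)*k^4 + (12)*k^3 + (- 6)*k^2 + (- 9)*k + (6)) * ((k+1)*g + d - S) + ((- 2)*q*k^2 + (- 3)*q*k + (2)*q + (- 1)*k^5 + (- 3)*k^4 + (- 1)*k^3 + (4)*k^2 + (6)*k + (- 6)) * ((k+1)*h + d + c - S) + ((- 1)*q*k^4 + (- 4)*q*k^3 + (- 4)*q*k^2 + (1)*k^6 + (6)*k^5 + (13)*k^4 + (13)*k^3 + (4)*k^2 + (- 4)*k) * (a + (p-1)*b + c + d + 2*e + (q-3)*g + h - S)" by (Groebner_Basis.algebra)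
  hence zb: "((-8 + 2*p + 2*q) + (13 - 11*p - 7*q + 4*p*q) * k + (20 - 6*q - 4*p*q) * k^2 + (-1 + 11*p + 7*q - 7*p*q) * k^3 + (-20 + 12*p + 12*q - 2*p*q) * k^4 + (-16 + 6*p + 6*q) * k^5 + (-6 + p + q) * k^6 - k^7) * b = 0" using assms by simp
  have "((-8 + 2*p + 2*q) + (13 - 11*p - 7*q + 4*p*q) * k + (20 - 6*q - 4*p*q) * k^2 + (-1 + 11*p + 7*q - 7*p*q) * k^3 + (-20 + 12*p + 12*q - 2*p*q) * k^4 + (-16 + 6*p + 6*q) * k^5 + (-6 + p + q) * k^6 - k^7) * c = ((- 1)*p*k^3 + (- 3)*p*k^2 + (- 2)*p*k + (- 1)*q*k^4 + (- 3)*q*k^3 + (- 1)*q*k^2 + (3)*q*k + (2)*q + (2)*k^3 + (1)*k^2 + (- 5)*k + (- 4)) * ((k+1)*a + c + (p-1)*b - S) + ((2)*p*q*k^3 + (5)*p*q*k^2 + (1)*p*q*k + (- 2)*p*q + (- 1)*p*k^5 + (- 4)*p*k^4 + (- 5)*p*k^3 + (- 5)*p*k^2 + (1)*p*k + (4)*p + (- 2)*q*k^3 + (- 5)*q*k^2 + (- 1)*q*k + (2)*q + (1)*k^5 + (4)*k^4 + (5)*k^3 + (5)*k^2 + (- 1)*k + (- 4)) * ((k+1)*b + a - S) + ((- 2)*p*q*k^3 + (- 5)*p*q*k^2 + (- 1)*p*q*k + (2)*p*q + (1)*p*k^5 + (5)*p*k^4 + (8)*p*k^3 + (7)*p*k^2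 + (- 1)*p*k + (- 4)*p + (1)*q*k^5 + (5)*q*k^4 + (10)*q*k^3 + (8)*q*k^2 + (- 2)*q*k + (- 4)*q + (- 1)*k^6 + (- 6)*k^5 + (- 15)*k^4 + (- 16)*k^3 + (- 4)*k^2 + (10)*k + (8)) * ((k+1)*c + a + h - S) + ((1)*p*k^3 + (2)*p*k^2 + (- 1)*p*k + (- 2)*p + (1)*q*k^4 + (4)*q*k^3 + (5)*q*k^2 + (2)*q*k + (- 1)*k^5 + (- 5)*k^4 + (- 11)*k^3 + (- 9)*k^2 + (2)*k + (4)) * ((k+1)*d + 2*e + (q-3)*g + h - S) + ((- 4)*p*k^2 + (- 2)*p*k + (2)*p + (- 2)*k^5 + (- 4)*k^4 + (6)*k^2 + (- 4)) * ((k+2)*e + d - S) + ((- 2)*p*q*k^2 + (- 3)*p*q*k + (2)*p*q + (6)*p*k^2 + (9)*p*k + (- 6)*p + (- 1)*q*k^5 + (- 3)*q*k^4 + (- 1)*q*k^3 + (4)*q*k^2 + (2)*q*k + (- 4)*q + (3)*k^5 + (9)*k^4 + (3)*k^3 + (- 12)*k^2 + (- 6)*k + (12)) * ((k+1)*g + d - S) + ((2)*p*q*k^2 + (3)*p*q*k + (- 2)*p*q + (- 1)*p*k^4 + (- 4)*p*k^3 + (- 6)*p*k^2 + (- 6)*p*k + (6)*p + (- 1)*q*k^4 + (- 4)*q*k^3 + (- 6)*q*k^2 + (- 2)*q*k + (4)*q + (2)*k^4 + (9)*k^3 + (10)*k^2 + (- 12)) * ((k+1)*h + d + c - S) + ((1)*p*k^3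 + (3)*p*k^2 + (2)*p*k + (- 1)*q*k^4 + (- 4)*q*k^3 + (- 5)*q*k^2 + (- 2)*q*k + (1)*k^6 + (5)*k^5 + (9)*k^4 + (8)*k^3 + (3)*k^2) * (a + (p-1)*b + c + d + 2*e + (q-3)*g + h - S)" by (Groebner_Basis.algebra)
  hence zc: "((-8 + 2*p + 2*q) + (13 - 11*p - 7*q + 4*p*q) * k + (20 - 6*q - 4*p*q) * k^2 + (-1 + 11*p + 7*q - 7*p*q) * k^3 + (-20 + 12*p + 12*q - 2*p*q) * k^4 + (-16 + 6*p + 6*q) * k^5 + (-6 + p + q) * k^6 - k^7) * c = 0" using assms by simp
  have "((-8 + 2*p + 2*q) + (13 - 11*p - 7*q + 4*p*q) * k + (20 - 6*q - 4*p*q) * k^2 + (-1 + 11*p + 7*q - 7*p*q) * k^3 + (-20 + 12*p + 12*q - 2*p*q) * k^4 + (-16 + 6*p + 6*q) * k^5 + (-6 + p + q) * k^6 - k^7) * d = ((- 1)*p*q*k^3 + (- 4)*p*q*k^2 + (- 4)*p*q*k + (1)*p*k^4 + (5)*p*k^3 + (10)*p*k^2 + (7)*p*k + (- 2)*p + (1)*q*k^4 + (5)*q*k^3 + (8)*q*k^2 + (3)*q*k + (- 2)*q + (- 1)*k^5 + (- 6)*k^4 + (- 16)*k^3 + (- 20)*k^2 + (- 6)*k + (6)) * ((k+1)*a + c + (p-1)*b - S) + ((1)*p*q*k^4 + (4)*p*q*k^3 + (4)*p*q*k^2 + (- 1)*p*k^5 + (- 5)*p*k^4 + (- 11)*p*k^3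 + (- 9)*p*k^2 + (3)*p*k + (2)*p + (- 1)*q*k^4 + (- 4)*q*k^3 + (- 4)*q*k^2 + (1)*k^5 + (5)*k^4 + (11)*k^3 + (9)*k^2 + (- 3)*k + (- 2)) * ((k+1)*b + a - S) + ((1)*p*k^3 + (2)*p*k^2 + (- 1)*p*k + (- 2)*p + (1)*q*k^4 + (4)*q*k^3 + (5)*q*k^2 + (2)*q*k + (- 1)*k^5 + (- 5)*k^4 + (- 11)*k^3 + (- 9)*k^2 + (2)*k + (4)) * ((k+1)*c + a + h - S) + ((- 1)*p*q*k^3 + (- 4)*p*q*k^2 + (- 4)*p*q*k + (1)*p*k^5 + (5)*p*k^4 + (8)*p*k^3 + (6)*p*k^2 + (3)*p*k + (- 2)*p + (1)*q*k^5 + (6)*q*k^4 + (13)*q*k^3 + (12)*q*k^2 + (3)*q*k + (- 2)*q + (- 1)*k^6 + (- 6)*k^5 + (- 17)*k^4 + (- 26)*k^3 + (- 17)*k^2 + (6)) * ((k+1)*d + 2*e + (q-3)*g + h - S) + ((- 2)*p*k^4 + (- 4)*p*k^3 + (2)*p*k^2 + (4)*p*k + (- 2)*k^4 + (- 6)*k^3 + (- 8)*k^2 + (- 2)*k + (2)) * ((k+2)*e + d - S) + ((- 1)*p*q*k^4 + (- 3)*p*q*k^3 + (4)*p*q*k + (3)*p*k^4 + (9)*p*k^3 + (- 12)*p*k + (- 1)*q*k^4 + (- 4)*q*k^3 + (- 6)*q*k^2 + (- 3)*q*k + (2)*q + (3)*k^4 + (12)*k^3 + (18)*k^2 + (9)*k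 + (- 6)) * ((k+1)*g + d - S) + ((- 1)*p*k^4 + (- 3)*p*k^3 + (- 1)*p*k^2 + (3)*p*k + (2)*p + (- 1)*q*k^3 + (- 3)*q*k^2 + (- 2)*q*k + (1)*k^2 + (- 1)*k + (- 2)) * ((k+1)*h + d + c - S) + ((1)*p*q*k^3 + (4)*p*q*k^2 + (4)*p*q*k + (- 1)*p*k^4 + (- 5)*p*k^3 + (- 10)*p*k^2 + (- 7)*p*k + (2)*p + (- 1)*q*k^5 + (- 6)*q*k^4 + (- 13)*q*k^3 + (- 12)*q*k^2 + (- 3)*q*k + (2)*q + (1)*k^6 + (7)*k^5 + (22)*k^4 + (36)*k^3 + (26)*k^2 + (1)*k + (- 8)) * (a + (p-1)*b + c + d + 2*e + (q-3)*g + h - S)" by (Groebner_Basis.algebra)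
  hence zd: "((-8 + 2*p + 2*q) + (13 - 11*p - 7*q + 4*p*q) * k + (20 - 6*q - 4*p*q) * k^2 + (-1 + 11*p + 7*q - 7*p*q) * k^3 + (-20 + 12*p + 12*q - 2*p*q) * k^4 + (-16 + 6*p + 6*q) * k^5 + (-6 + p + q) * k^6 - k^7) * d = 0" using assms by simp
  have "((-8 + 2*p + 2*q) + (13 - 11*p - 7*q + 4*p*q) * k + (20 - 6*q - 4*p*q) * k^2 + (-1 + 11*p + 7*q - 7*p*q) * k^3 + (-20 + 12*p + 12*q - 2*p*q) * k^4 + (-16 + 6*p + 6*q) * k^5 + (-6 + p + q) * k^6 - k^7) * e = ((1)*p*k^4 + (3)*p*k^3 + (2)*p*k^2 + (- 1)*k^5 + (- 4)*k^4 + (- 6)*k^3 + (- 2)*k^2 + (2)*k + (1)) * ((k+1)*a + c + (p-1)*b - S) + ((- 1)*p*k^5 + (- 3)*p*k^4 + (- 2)*p*k^3 + (2)*p*k^2 + (1)*p*k + (- 1)*p + (1)*k^5 + (3)*k^4 + (2)*k^3 + (- 2)*k^2 + (- 1)*k + (1)) * ((k+1)*b + a - S) + ((- 2)*p*k^2 + (- 1)*p*k + (1)*p + (- 1)*k^5 + (- 2)*k^4 + (3)*k^2 + (- 2)) * ((k+1)*c + a + h - S) + ((- 1)*p*k^4 + (- 2)*p*k^3 + (1)*p*k^2 + (2)*p*k + (- 1)*k^4 + (- 3)*k^3 + (- 4)*k^2 + (- 1)*k + (1)) * ((k+1)*d + 2*e + (q-3)*g + h - S) + ((- 2)*p*q*k^3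 + (- 3)*p*q*k^2 + (2)*p*q*k + (1)*p*k^5 + (4)*p*k^4 + (8)*p*k^3 + (5)*p*k^2 + (- 8)*p*k + (1)*p + (1)*q*k^5 + (4)*q*k^4 + (4)*q*k^3 + (- 1)*q*k^2 + (- 4)*q*k + (1)*q + (- 1)*k^6 + (- 6)*k^5 + (- 14)*k^4 + (- 8)*k^3 + (9)*k^2 + (12)*k + (- 5)) * ((k+2)*e + d - S) + ((2)*p*q*k^3 + (3)*p*q*k^2 + (- 2)*p*q*k + (- 6)*p*k^3 + (- 9)*p*k^2 + (6)*p*k + (- 1)*q*k^5 + (- 4)*q*k^4 + (- 4)*q*k^3 + (1)*q*k^2 + (4)*q*k + (- 1)*q + (3)*k^5 + (12)*k^4 + (12)*k^3 + (- 3)*k^2 + (- 12)*k + (3)) * ((k+1)*g + d - S) + ((2)*p*k^3 + (3)*p*k^2 + (- 1)*p + (- 1)*k^5 + (- 3)*k^4 + (- 3)*k^3 + (2)*k + (1)) * ((k+1)*h + d + c - S) + ((- 1)*p*k^4 + (- 3)*p*k^3 + (- 2)*p*k^2 + (1)*k^6 + (5)*k^5 + (9)*k^4 + (6)*k^3 + (- 1)*k^2 + (- 2)*k) * (a + (p-1)*b + c + d + 2*e + (q-3)*g + h - S)" by (Groebner_Basis.algebra)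
  hence ze: "((-8 + 2*p + 2*q) + (13 - 11*p - 7*q + 4*p*q) * k + (20 - 6*q - 4*p*q) * k^2 + (-1 + 11*p + 7*q - 7*p*q) * k^3 + (-20 + 12*p + 12*q - 2*p*q) * k^4 + (-16 + 6*p + 6*q) * k^5 + (-6 + p + q) * k^6 - k^7) * e = 0" using assms by simp
  have "((-8 + 2*p + 2*q) + (13 - 11*p - 7*q + 4*p*q) * k + (20 - 6*q - 4*p*q) * k^2 + (-1 + 11*p + 7*q - 7*p*q) * k^3 + (-20 + 12*p + 12*q - 2*p*q) * k^4 + (-16 + 6*p + 6*q) * k^5 + (-6 + p + q) * k^6 - k^7) * g = ((1)*p*k^4 + (4)*p*k^3 + (4)*p*k^2 + (- 1)*k^5 + (- 5)*k^4 + (- 9)*k^3 + (- 5)*k^2 + (3)*k + (2)) * ((k+1)*a + c + (p-1)*b - S) + ((- 1)*p*k^5 + (- 4)*p*k^4 + (- 4)*p*k^3 + (2)*p*k^2 + (3)*p*k + (- 2)*p + (1)*k^5 + (4)*k^4 + (4)*k^3 + (- 2)*k^2 + (- 3)*k + (2)) * ((k+1)*b + a - S) + ((- 2)*p*k^2 + (- 3)*p*k + (2)*p + (- 1)*k^5 + (- 3)*k^4 + (- 1)*k^3 + (4)*k^2 + (2)*k + (- 4)) * ((k+1)*c + a + h - S) + ((- 1)*p*k^4 + (- 3)*p*k^3 + (4)*p*k + (- 1)*k^4 + (- 4)*k^3 + (- 6)*k^2 + (- 3)*k + (2)) * ((k+1)*d + 2*e + (q-3)*g + h - S) + ((4)*p*k^3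 + (6)*p*k^2 + (- 4)*p*k + (- 2)*k^5 + (- 8)*k^4 + (- 8)*k^3 + (2)*k^2 + (8)*k + (- 2)) * ((k+2)*e + d - S) + ((1)*p*k^5 + (5)*p*k^4 + (1)*p*k^3 + (- 11)*p*k^2 + (- 1)*p*k + (2)*p + (- 1)*k^6 + (- 2)*k^5 + (4)*k^4 + (12)*k^3 + (8)*k^2 + (- 6)*k + (- 2)) * ((k+1)*g + d - S) + ((2)*p*k^3 + (5)*p*k^2 + (1)*p*k + (- 2)*p + (- 1)*k^5 + (- 4)*k^4 + (- 5)*k^3 + (- 1)*k^2 + (3)*k + (2)) * ((k+1)*h + d + c - S) + ((- 1)*p*k^4 + (- 4)*p*k^3 + (- 4)*p*k^2 + (1)*k^6 + (6)*k^5 + (13)*k^4 + (11)*k^3 + (- 4)*k) * (a + (p-1)*b + c + d + 2*e + (q-3)*g + h - S)" by (Groebner_Basis.algebra)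
  hence zg: "((-8 + 2*p + 2*q) + (13 - 11*p - 7*q + 4*p*q) * k + (20 - 6*q - 4*p*q) * k^2 + (-1 + 11*p + 7*q - 7*p*q) * k^3 + (-20 + 12*p + 12*q - 2*p*q) * k^4 + (-16 + 6*p + 6*q) * k^5 + (-6 + p + q) * k^6 - k^7) * g = 0" using assms by simp
  have "((-8 + 2*p + 2*q) + (13 - 11*p - 7*q + 4*p*q) * k + (20 - 6*q - 4*p*q) * k^2 + (-1 + 11*p + 7*q - 7*p*q) * k^3 + (-20 + 12*p + 12*q - 2*p*q) * k^4 + (-16 + 6*p + 6*q) * k^5 + (-6 + p + q) * k^6 - k^7) * h = ((1)*p*k^4 + (4)*p*k^3 + (5)*p*k^2 + (2)*p*k + (1)*q*k^3 + (2)*q*k^2 + (- 1)*q*k + (- 2)*q + (- 1)*k^5 + (- 5)*k^4 + (- 9)*k^3 + (- 7)*k^2 + (4)*k + (6)) * ((k+1)*a + c + (p-1)*b - S) + ((- 2)*p*q*k^2 + (- 3)*p*q*k + (2)*p*q + (- 1)*p*k^5 + (- 3)*p*k^4 + (- 1)*p*k^3 + (4)*p*k^2 + (6)*p*k + (- 6)*p + (2)*q*k^2 + (3)*q*k + (- 2)*q + (1)*k^5 + (3)*k^4 + (1)*k^3 + (- 4)*k^2 + (- 6)*k + (6)) * ((k+1)*b + a - S) + ((2)*p*q*k^2 + (3)*p*q*k + (- 2)*p*q + (- 1)*p*k^4 + (- 4)*p*k^3 + (- 6)*p*k^2 + (- 6)*p*k + (6)*p + (- 1)*q*k^4 + (-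 4)*q*k^3 + (- 6)*q*k^2 + (- 2)*q*k + (4)*q + (2)*k^4 + (9)*k^3 + (10)*k^2 + (- 12)) * ((k+1)*c + a + h - S) + ((- 1)*p*k^4 + (- 3)*p*k^3 + (- 1)*p*k^2 + (3)*p*k + (2)*p + (- 1)*q*k^3 + (- 3)*q*k^2 + (- 2)*q*k + (1)*k^2 + (- 1)*k + (- 2)) * ((k+1)*d + 2*e + (q-3)*g + h - S) + ((4)*p*k^3 + (6)*p*k^2 + (- 2)*p + (- 2)*k^5 + (- 6)*k^4 + (- 6)*k^3 + (4)*k + (2)) * ((k+2)*e + d - S) + ((2)*p*q*k^3 + (5)*p*q*k^2 + (1)*p*q*k + (- 2)*p*q + (- 6)*p*k^3 + (- 15)*p*k^2 + (- 3)*p*k + (6)*p + (- 1)*q*k^5 + (- 4)*q*k^4 + (- 5)*q*k^3 + (- 1)*q*k^2 + (3)*q*k + (2)*q + (3)*k^5 + (12)*k^4 + (15)*k^3 + (3)*k^2 + (- 9)*k + (- 6)) * ((k+1)*g + d - S) + ((- 2)*p*q*k^3 + (- 5)*p*q*k^2 + (- 1)*p*q*k + (2)*p*q + (1)*p*k^5 + (5)*p*k^4 + (10)*p*k^3 + (12)*p*k^2 + (- 6)*p + (1)*q*k^5 + (5)*q*k^4 + (8)*q*k^3 + (3)*q*k^2 + (- 3)*q*k + (- 2)*q + (- 1)*k^6 + (- 6)*k^5 + (- 15)*k^4 + (- 16)*k^3 + (12)*k + (6)) * ((k+1)*h + d + c - S) + ((- 1)*p*k^4 + (- 4)*p*k^3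 + (- 5)*p*k^2 + (- 2)*p*k + (1)*q*k^3 + (3)*q*k^2 + (2)*q*k + (1)*k^6 + (5)*k^5 + (9)*k^4 + (6)*k^3 + (- 3)*k^2 + (- 4)*k) * (a + (p-1)*b + c + d + 2*e + (q-3)*g + h - S)" by (Groebner_Basis.algebra)
  hence zh: "((-8 + 2*p + 2*q) + (13 - 11*p - 7*q + 4*p*q) * k + (20 - 6*q - 4*p*q) * k^2 + (-1 + 11*p + 7*q - 7*p*q) * k^3 + (-20 + 12*p + 12*q - 2*p*q) * k^4 + (-16 + 6*p + 6*q) * k^5 + (-6 + p + q) * k^6 - k^7) * h = 0" using assms by simp
  have "((-8 + 2*p + 2*q) + (13 - 11*p - 7*q + 4*p*q) * k + (20 - 6*q - 4*p*q) * k^2 + (-1 + 11*p + 7*q - 7*p*q) * k^3 + (-20 + 12*p + 12*q - 2*p*q) * k^4 + (-16 + 6*p + 6*q) * k^5 + (-6 + p + q) * k^6 - k^7) * S = ((- 1)*p*q*k^3 + (- 4)*p*q*k^2 + (- 4)*p*q*k + (1)*p*k^5 + (6)*p*k^4 + (13)*p*k^3 + (14)*p*k^2 + (7)*p*k + (- 2)*p + (1)*q*k^4 + (5)*q*k^3 + (8)*q*k^2 + (3)*q*k + (- 2)*q + (- 1)*k^6 + (- 7)*k^5 + (- 20)*k^4 + (- 30)*k^3 + (- 22)*k^2 + (- 1)*k + (8)) * ((k+1)*a + c + (p-1)*b - S) + ((1)*p*q*k^4 + (4)*p*q*k^3 + (4)*p*q*k^2 + (- 1)*p*k^6 + (- 6)*p*k^5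 + (- 13)*p*k^4 + (- 13)*p*k^3 + (- 4)*p*k^2 + (4)*p*k + (- 1)*q*k^4 + (- 4)*q*k^3 + (- 4)*q*k^2 + (1)*k^6 + (6)*k^5 + (13)*k^4 + (13)*k^3 + (4)*k^2 + (- 4)*k) * ((k+1)*b + a - S) + ((- 1)*p*k^3 + (- 3)*p*k^2 + (- 2)*p*k + (1)*q*k^4 + (4)*q*k^3 + (5)*q*k^2 + (2)*q*k + (- 1)*k^6 + (- 5)*k^5 + (- 9)*k^4 + (- 8)*k^3 + (- 3)*k^2) * ((k+1)*c + a + h - S) + ((- 1)*p*q*k^3 + (- 4)*p*q*k^2 + (- 4)*p*q*k + (1)*p*k^4 + (5)*p*k^3 + (10)*p*k^2 + (7)*p*k + (- 2)*p + (1)*q*k^5 + (6)*q*k^4 + (13)*q*k^3 + (12)*q*k^2 + (3)*q*k + (- 2)*q + (- 1)*k^6 + (- 7)*k^5 + (- 22)*k^4 + (- 36)*k^3 + (- 26)*k^2 + (- 1)*k + (8)) * ((k+1)*d + 2*e + (q-3)*g + h - S) + ((2)*p*k^4 + (6)*p*k^3 + (4)*p*k^2 + (- 2)*k^6 + (- 10)*k^5 + (- 18)*k^4 + (- 12)*k^3 + (2)*k^2 + (4)*k) * ((k+2)*e + d - S) + ((1)*p*q*k^4 + (4)*p*q*k^3 + (4)*p*q*k^2 + (- 3)*p*k^4 + (- 12)*p*k^3 + (- 12)*p*k^2 + (- 1)*q*k^6 + (- 6)*q*k^5 + (- 13)*q*k^4 + (- 11)*q*k^3 + (4)*q*k + (3)*k^6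 + (18)*k^5 + (39)*k^4 + (33)*k^3 + (- 12)*k) * ((k+1)*g + d - S) + ((1)*p*k^4 + (4)*p*k^3 + (5)*p*k^2 + (2)*p*k + (- 1)*q*k^3 + (- 3)*q*k^2 + (- 2)*q*k + (- 1)*k^6 + (- 5)*k^5 + (- 9)*k^4 + (- 6)*k^3 + (3)*k^2 + (4)*k) * ((k+1)*h + d + c - S) + ((1)*p*q*k^3 + (4)*p*q*k^2 + (4)*p*q*k + (- 1)*p*k^5 + (- 6)*p*k^4 + (- 13)*p*k^3 + (- 14)*p*k^2 + (- 7)*p*k + (2)*p + (- 1)*q*k^5 + (- 6)*q*k^4 + (- 13)*q*k^3 + (- 12)*q*k^2 + (- 3)*q*k + (2)*q + (1)*k^7 + (8)*k^6 + (26)*k^5 + (46)*k^4 + (47)*k^3 + (22)*k^2 + (- 3)*k + (- 8)) * (a + (p-1)*b + c + d + 2*e + (q-3)*g + h - S)" by (Groebner_Basis.algebra)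
  hence zS: "((-8 + 2*p + 2*q) + (13 - 11*p - 7*q + 4*p*q) * k + (20 - 6*q - 4*p*q) * k^2 + (-1 + 11*p + 7*q - 7*p*q) * k^3 + (-20 + 12*p + 12*q - 2*p*q) * k^4 + (-16 + 6*p + 6*q) * k^5 + (-6 + p + q) * k^6 - k^7) * S = 0" using assms by simp
  show ?thesis using za zb zc zd ze zg zh zS by auto
qed

definition "xa (p::real) (q::real) (k::real) = (2*p*k^4 + 6*p*k^3 + 4*p*k^2 + (- 2)*k^5 + (- 8)*k^4 + (- 12)*k^3 + (- 4)*k^2 + 4*k + 2)"
definition "xb (p::real) (q::real) (k::real) = ((- 2)*k^5 + (- 6)*k^4 + (- 4)*k^3 + 4*k^2 + 2*k + (- 2))"
definition "xc (p::real) (q::real) (k::real) = ((- 4)*p*k^2 + (- 2)*p*k + 2*p + (- 2)*k^5 + (- 4)*k^4 + 6*k^2 + (- 4))"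
definition "xd (p::real) (q::real) (k::real) = ((- 2)*p*k^4 + (- 4)*p*k^3 + 2*p*k^2 + 4*p*k + (- 2)*k^4 + (- 6)*k^3 + (- 8)*k^2 + (- 2)*k + 2)"
definition "xe (p::real) (q::real) (k::real) = ((- 2)*p*q*k^3 + (- 3)*p*q*k^2 + 2*p*q*k + 1*p*k^5 + 4*p*k^4 + 8*p*k^3 + 5*p*k^2 + (- 8)*p*k + 1*p + 1*q*k^5 + 4*q*k^4 + 4*q*k^3 + (- 1)*q*k^2 + (- 4)*q*k + 1*q + (- 1)*k^6 + (- 6)*k^5 + (- 14)*k^4 + (- 8)*k^3 + 9*k^2 + 12*k + (- 5))"
definition "xg (p::real) (q::real) (k::real) = (4*p*k^3 + 6*p*k^2 + (- 4)*p*k + (- 2)*k^5 + (- 8)*k^4 + (- 8)*k^3 + 2*k^2 + 8*k + (- 2))"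
definition "xh (p::real) (q::real) (k::real) = (4*p*k^3 + 6*p*k^2 + (- 2)*p + (- 2)*k^5 + (- 6)*k^4 + (- 6)*k^3 + 4*k + 2)"
definition "xS (p::real) (q::real) (k::real) = (2*p*k^4 + 6*p*k^3 + 4*p*k^2 + (- 2)*k^6 + (- 10)*k^5 + (- 18)*k^4 + (- 12)*k^3 + 2*k^2 + 4*k)"
lemma alg1:
  fixes p q k :: real
  defines "a \<equiv> xa p q k" and "b \<equiv> xb p q k" and "c \<equiv> xc p q k" and "d \<equiv> xd p q k" and "e \<equiv> xe p q k" and "g \<equiv> xg p q k" and "h \<equiv> xh p q k" and "S \<equiv> xS p q k"
  shows "((k+1)*a + c + (p-1)*b - S) = 0"
    and "((k+1)*b + a - S) = 0"
    and "((k+1)*c + a + h - S) = 0"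
    and "((k+1)*d + 2*e + (q-3)*g + h - S) = 0"
    and "((k+2)*e + d - S) = ((-8 + 2*p + 2*q) + (13 - 11*p - 7*q + 4*p*q) * k + (20 - 6*q - 4*p*q) * k^2 + (-1 + 11*p + 7*q - 7*p*q) * k^3 + (-20 + 12*p + 12*q - 2*p*q) * k^4 + (-16 + 6*p + 6*q) * k^5 + (-6 + p + q) * k^6 - k^7)"
    and "((k+1)*g + d - S) = 0"
    and "((k+1)*h + d + c - S) = 0"
    and "(a + (p-1)*b + c + d + 2*e + (q-3)*g + h - S) = 0"
  unfolding assms xa_def xb_def xc_def xd_def xe_def xg_def xh_def xS_def
  by (Groebner_Basis.algebra)+

lemma fp_eq: "f_poly (int p) (int q) k = (-8 + 2*real p + 2*real q) + (13 - 11*real p - 7*real q + 4*real p*real q) * k + (20 - 6*real q - 4*real p*real q) * k^2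
   + (-1 + 11*real p + 7*real q - 7*real p*real q) * k^3 + (-20 + 12*real p + 12*real q - 2*real p*real q) * k^4
   + (-16 + 6*real p + 6*real q) * k^5 + (-6 + real p + real q) * k^6 - k^7"
  by (simp add: f_poly_def)


context
  fixes p q :: nat
  assumes p1: "p \<ge> 1" and q3: "q \<ge> 3"
begin

lemma nb0: "{j. j < p+q+2 \<and> U_graph p q 0 j} = {1..p}"
  using p1 q3 by (auto simp: U_graph_def U_base_edge_def)
lemma nb1: "{j. j < p+q+2 \<and> U_graph p q 1 j} = {0, p+q+1}"
  using p1 q3 by (auto simp: U_graph_def U_base_edge_def)
lemma nbb: "2 \<le> i \<Longrightarrow> i \<le> p \<Longrightarrow> {j. j < p+q+2 \<and> U_graph p q i j} = {0}"
  using p1 q3 by (auto simp: U_graph_def U_base_edge_def)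
lemma nbd: "{j. j < p+q+2 \<and> U_graph p q (p+1) j} = {p+2..p+q+1}"
  using p1 q3 by (auto simp: U_graph_def U_base_edge_def)
lemma nbe1: "{j. j < p+q+2 \<and> U_graph p q (p+2) j} = {p+1, p+3}"
  using p1 q3 by (auto simp: U_graph_def U_base_edge_def)
lemma nbe2: "{j. j < p+q+2 \<and> U_graph p q (p+3) j} = {p+1, p+2}"
  using p1 q3 by (auto simp: U_graph_def U_base_edge_def)
lemma nbg: "p+4 \<le> i \<Longrightarrow> i \<le> p+q \<Longrightarrow> {j. j < p+q+2 \<and> U_graph p q i j} = {p+1}"
  using p1 q3 by (auto simp: U_graph_def U_base_edge_def)
lemma nbh: "{j. j < p+q+2 \<and> U_graph p q (p+q+1) j} = {1, p+1}"
  using p1 q3 by (auto simp: U_graph_def U_base_edge_def)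

lemma irr: "\<not> U_graph p q i i"
  using p1 q3 by (auto simp: U_graph_def U_base_edge_def)

lemma sum_split:
  fixes w :: "nat \<Rightarrow> real"
  shows "(\<Sum>j<p+q+2. w j) = w 0 + w 1 + (\<Sum>j\<in>{2..p}. w j) + w (p+1) + w (p+2) + w (p+3)
     + (\<Sum>j\<in>{p+4..p+q}. w j) + w (p+q+1)"
proof -
  have "{..<p+q+2} = {0,1} \<union> {2..p} \<union> {p+1,p+2,p+3} \<union> {p+4..p+q} \<union> {p+q+1}"
    using p1 q3 by auto
  moreover have "(\<Sum>j\<in>{0,1} \<union> {2..p} \<union> {p+1,p+2,p+3} \<union> {p+4..p+q} \<union> {p+q+1}. w j)
     = w 0 + w 1 + (\<Sum>j\<in>{2..p}. w j) + w (p+1) + w (p+2) + w (p+3)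
     + (\<Sum>j\<in>{p+4..p+q}. w j) + w (p+q+1)"
    using p1 q3 by (subst sum.union_disjoint; auto)+
  ultimately show ?thesis by simp
qed

lemma sum_1p: "(\<Sum>j\<in>{1..p}. w j) = w 1 + (\<Sum>j\<in>{2..p}. (w j::real))"
proof -
  have "{1..p} = insert 1 {2..p}" using p1 by auto
  thus ?thesis by simp
qed

lemma sum_d: "(\<Sum>j\<in>{p+2..p+q+1}. w j) = w (p+2) + w (p+3) + (\<Sum>j\<in>{p+4..p+q}. w j) + (w (p+q+1)::real)"
proof -
  have "{p+2..p+q+1} = {p+2,p+3} \<union> {p+4..p+q} \<union> {p+q+1}" using q3 by auto
  moreover have "(\<Sum>j\<in>{p+2,p+3} \<union> {p+4..p+q} \<union> {p+q+1}. w j) = w (p+2) + w (p+3) + (\<Sum>j\<in>{p+4..p+q}. w j) + (w (p+q+1)::real)"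
    using q3 by (subst sum.union_disjoint; auto)+
  ultimately show ?thesis by simp
qed

lemma row:
  assumes v: "v \<in> carrier_vec (p+q+2)" and i: "i < p+q+2"
  shows "(adj_matrix (p+q+2) (compl_graph (U_graph p q)) *\<^sub>v v) $ i
     = (\<Sum>j<p+q+2. v$j) - v$i - (\<Sum>j\<in>{j. j < p+q+2 \<and> U_graph p q i j}. v$j)"
proof -
  let ?n = "p+q+2"
  have "(adj_matrix ?n (compl_graph (U_graph p q)) *\<^sub>v v) $ i
     = (\<Sum>j<?n. (if compl_graph (U_graph p q) i j then 1 else 0) * v$j)"
    using v i by (simp add: adj_matrix_def scalar_prod_def row_def lessThan_atLeast0)
  also have "\<dots> = (\<Sum>j\<in>{j. j < ?n \<and> compl_graph (U_graph p q) i j}. v$j)"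
  proof -
    have "{j. j < ?n \<and> compl_graph (U_graph p q) i j} = {j\<in>{..<?n}. compl_graph (U_graph p q) i j}" by auto
    moreover have "(\<Sum>j<?n. (if compl_graph (U_graph p q) i j then 1 else 0) * v$j)
       = (\<Sum>j\<in>{..<?n}. if compl_graph (U_graph p q) i j then v$j else 0)"
      by (rule sum.cong) auto
    moreover have "\<dots> = (\<Sum>j\<in>{j\<in>{..<?n}. compl_graph (U_graph p q) i j}. v$j)"
      by (rule sum.inter_filter[symmetric]) simp
    ultimately show ?thesis by simp
  qed
  also have "\<dots> = (\<Sum>j<?n. v$j) - v$i - (\<Sum>j\<in>{j. j < ?n \<and> U_graph p q i j}. v$j)"
  proof -
    have "{..<?n} = {i} \<union> {j. j < ?n \<and> U_graph p q i j} \<union> {j. j < ?n \<and> compl_graph (U_graph p q) i j}"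
      using i by (auto simp: compl_graph_def)
    hence "(\<Sum>j<?n. v$j) = v$i + (\<Sum>j\<in>{j. j < ?n \<and> U_graph p q i j}. v$j) + (\<Sum>j\<in>{j. j < ?n \<and> compl_graph (U_graph p q) i j}. v$j)"
      using irr[of i] by (simp add: sum.union_disjoint compl_graph_def disjoint_iff)
    thus ?thesis by simp
  qed
  finally show ?thesis .
qed

lemma dir2:
  assumes ev: "eigenvalue (adj_matrix (p+q+2) (compl_graph (U_graph p q))) k"
  shows "k = -1 \<or> k = 0 \<or> f_poly (int p) (int q) k = 0"
proof -
  let ?n = "p+q+2"
  let ?A = "adj_matrix ?n (compl_graph (U_graph p q))"
  obtain v where v: "v \<in> carrier_vec ?n" and vnz: "v \<noteq> 0\<^sub>v ?n" and Av: "?A *\<^sub>v v = k \<cdot>\<^sub>v v"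
    using ev unfolding eigenvalue_def eigenvector_def by (auto simp: adj_matrix_def)
  define S where "S = (\<Sum>j<?n. v$j)"
  have eq: "k * v$i = S - v$i - (\<Sum>j\<in>{j. j < ?n \<and> U_graph p q i j}. v$j)" if "i < ?n" for i
  proof -
    have "(?A *\<^sub>v v) $ i = k * v$i" using Av that v by simp
    thus ?thesis using row[OF v that] S_def by simp
  qed
  show ?thesis
  proof (rule ccontr)
    assume "\<not> ?thesis"
    hence k1: "k \<noteq> -1" and k0: "k \<noteq> 0" and fnz: "f_poly (int p) (int q) k \<noteq> 0" by auto
    have k1': "k + 1 \<noteq> 0" using k1 by auto
    define a c d e h where "a = v$0" and "c = v$1" and "d = v$(p+1)" and "e = v$(p+2)" and "h = v$(p+q+1)"
    define b g where "b = (S - a)/(k+1)" and "g = (S - d)/(k+1)"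
    have hb: "v$i = b" if "i \<in> {2..p}" for i
    proof -
      have "k * v$i = S - v$i - a" using eq[of i] nbb[of i] that a_def by auto
      thus ?thesis unfolding b_def using k1' by (simp add: field_simps)
    qed
    have hg: "v$i = g" if "i \<in> {p+4..p+q}" for i
    proof -
      have "k * v$i = S - v$i - d" using eq[of i] nbg[of i] that d_def by auto
      thus ?thesis unfolding g_def using k1' by (simp add: field_simps)
    qed
    have sb: "(\<Sum>j\<in>{2..p}. v$j) = (real p - 1) * b"
      using hb p1 by (simp add: of_nat_diff)
    have sg: "(\<Sum>j\<in>{p+4..p+q}. v$j) = (real q - 3) * g"
      using hg q3 by (simp add: of_nat_diff)
    have he: "v$(p+3) = e"
    proof -
      have "k * v$(p+3) = S - v$(p+3) - (d + e)" using eq[of "p+3"] nbe2 q3 d_def e_def by auto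
      moreover have "k * e = S - e - (d + v$(p+3))" using eq[of "p+2"] nbe1 q3 d_def e_def by auto
      ultimately have "k * v$(p+3) - k * e = 0" by linarith
      hence "k * (v$(p+3) - e) = 0" by (simp add: right_diff_distrib)
      thus ?thesis using k0 by simp
    qed
    have E1: "(k+1)*a + c + (real p-1)*b - S = 0"
      using eq[of 0] nb0 sum_1p[of "\<lambda>j. v$j"] sb a_def c_def by (simp add: algebra_simps)
    have E2: "(k+1)*b + a - S = 0" unfolding b_def using k1' by (simp add: field_simps)
    have E3: "(k+1)*c + a + h - S = 0"
      using eq[of 1] nb1 a_def c_def h_def p1 q3 by (simp add: algebra_simps)
    have E4: "(k+1)*d + 2*e + (real q-3)*g + h - S = 0"
      using eq[of "p+1"] nbd sum_d[of "\<lambda>j. v$j"] sg he d_def e_def h_def by (simp add: algebra_simps)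
    have E5: "(k+2)*e + d - S = 0"
      using eq[of "p+2"] nbe1 he d_def e_def q3 by (simp add: algebra_simps)
    have E6: "(k+1)*g + d - S = 0" unfolding g_def using k1' by (simp add: field_simps)
    have E7: "(k+1)*h + d + c - S = 0"
    proof -
      have "(\<Sum>j\<in>{1, p+1}. v$j) = c + d" using p1 c_def d_def by simp
      thus ?thesis using eq[of "p+q+1"] nbh h_def by (simp add: algebra_simps)
    qed
    have E8: "a + (real p-1)*b + c + d + 2*e + (real q-3)*g + h - S = 0"
      using sum_split[of "\<lambda>j. v$j"] sb sg he a_def c_def d_def e_def h_def S_def by (simp add: algebra_simps)
    have nz: "a \<noteq> 0 \<or> b \<noteq> 0 \<or> c \<noteq> 0 \<or> d \<noteq> 0 \<or> e \<noteq> 0 \<or> g \<noteq> 0 \<or> h \<noteq> 0 \<or> S \<noteq> 0"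
    proof (rule ccontr)
      assume "\<not> ?thesis"
      hence z: "a = 0" "b = 0" "c = 0" "d = 0" "e = 0" "g = 0" "h = 0" by auto
      have "v = 0\<^sub>v ?n"
      proof (rule eq_vecI)
        show "dim_vec v = dim_vec (0\<^sub>v ?n)" using v by simp
        fix i assume "i < dim_vec (0\<^sub>v ?n)"
        hence i: "i < ?n" by simp
        have "v$i = 0"
        proof -
          consider "i = 0" | "i = 1" | "i \<in> {2..p}" | "i = p+1" | "i = p+2" | "i = p+3"
            | "i \<in> {p+4..p+q}" | "i = p+q+1" using i by fastforce
          thus ?thesis using z hb hg he a_def c_def d_def e_def h_def by cases auto
        qed
        thus "v$i = 0\<^sub>v ?n $ i" using i by simp
      qed
      thus False using vnz by simp
    qed
    have "f_poly (int p) (int q) k = 0"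
      unfolding fp_eq using alg2[OF E1 E2 E3 E4 E5 E6 E7 E8] nz by blast
    thus False using fnz by simp
  qed
qed

lemma bneg: "k < -2 \<Longrightarrow> xb P Q k \<noteq> 0"
proof -
  assume k: "k < -2"
  have "xb P Q k = -2 * (k^3 * ((k+1)*(k+2)) - (2*k-1)*(k+1))"
    unfolding xb_def by (Groebner_Basis.algebra)
  moreover have "k^3 < 0" using k by (simp add: power3_eq_cube mult_neg_pos zero_less_mult_iff mult_less_0_iff)
  moreover have "(k+1)*(k+2) > 0" using k by (simp add: zero_less_mult_iff)
  moreover have "(2*k-1)*(k+1) > 0" using k by (simp add: zero_less_mult_iff)
  ultimately have "k^3 * ((k+1)*(k+2)) - (2*k-1)*(k+1) < 0"
    by (smt (verit) mult_neg_pos)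
  moreover have "\<And>X::real. X < 0 \<Longrightarrow> -2 * X > 0" by linarith
  ultimately have "xb P Q k > 0" using \<open>xb P Q k = _\<close> by metis
  thus ?thesis by simp
qed

lemma dir1:
  assumes f0: "f_poly (int p) (int q) k = 0" and k: "k < -2"
  shows "eigenvalue (adj_matrix (p+q+2) (compl_graph (U_graph p q))) k"
proof -
  let ?n = "p+q+2"
  let ?A = "adj_matrix ?n (compl_graph (U_graph p q))"
  define P Q where "P = real p" and "Q = real q"
  define a b c d e g h S where "a = xa P Q k" and "b = xb P Q k" and "c = xc P Q k" and "d = xd P Q k"
    and "e = xe P Q k" and "g = xg P Q k" and "h = xh P Q k" and "S = xS P Q k"
  note L = alg1[where p=P and q=Q and k=k, folded a_def b_def c_def d_def e_def g_def h_def S_def]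
  have F0: "((-8 + 2*P + 2*Q) + (13 - 11*P - 7*Q + 4*P*Q) * k + (20 - 6*Q - 4*P*Q) * k^2 + (-1 + 11*P + 7*Q - 7*P*Q) * k^3 + (-20 + 12*P + 12*Q - 2*P*Q) * k^4 + (-16 + 6*P + 6*Q) * k^5 + (-6 + P + Q) * k^6 - k^7) = 0"
    using f0 unfolding fp_eq P_def Q_def .
  define w where "w i = (if i = 0 then a else if i = 1 then c else if i \<le> p then b else if i = p+1 then d
     else if i \<le> p+3 then e else if i \<le> p+q then g else h)" for i
  define v where "v = vec ?n w"
  have v: "v \<in> carrier_vec ?n" unfolding v_def by simp
  have vi: "v$i = w i" if "i < ?n" for i using that unfolding v_def by simp
  have w0: "w 0 = a" and w1: "w 1 = c" and wd: "w (p+1) = d" and we2: "w (p+2) = e" and we3: "w (p+3) = e"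
    and wh: "w (p+q+1) = h" using p1 q3 by (auto simp: w_def)
  have wb: "w i = b" if "i \<in> {2..p}" for i using that by (auto simp: w_def)
  have wg: "w i = g" if "i \<in> {p+4..p+q}" for i using that by (auto simp: w_def)
  have sb: "(\<Sum>j\<in>{2..p}. v$j) = (P - 1) * b"
  proof -
    have "(\<Sum>j\<in>{2..p}. v$j) = (\<Sum>j\<in>{2..p}. b)" using vi wb by (intro sum.cong) auto
    thus ?thesis using p1 by (simp add: P_def of_nat_diff)
  qed
  have sg: "(\<Sum>j\<in>{p+4..p+q}. v$j) = (Q - 3) * g"
  proof -
    have "(\<Sum>j\<in>{p+4..p+q}. v$j) = (\<Sum>j\<in>{p+4..p+q}. g)" using vi wg by (intro sum.cong) auto
    thus ?thesis using q3 by (simp add: Q_def of_nat_diff)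
  qed
  have v0: "v$0 = a" and v1: "v$1 = c" and vd: "v$(p+1) = d" and ve2: "v$(p+2) = e" and ve3: "v$(p+3) = e"
    and vh: "v$(p+q+1) = h" using vi w0 w1 wd we2 we3 wh q3 by auto
  have sumv: "(\<Sum>j<?n. v$j) = S"
  proof -
    have "(\<Sum>j<?n. v$j) = v$0 + v$1 + (\<Sum>j\<in>{2..p}. v$j) + v$(p+1) + v$(p+2) + v$(p+3)
     + (\<Sum>j\<in>{p+4..p+q}. v$j) + v$(p+q+1)" by (rule sum_split)
    also have "\<dots> = S" using sb sg v0 v1 vd ve2 ve3 vh L(8) by (simp add: algebra_simps)
    finally show ?thesis .
  qed
  have Av: "?A *\<^sub>v v = k \<cdot>\<^sub>v v"
  proof (rule eq_vecI)
    show "dim_vec (?A *\<^sub>v v) = dim_vec (k \<cdot>\<^sub>v v)" using v by (simp add: adj_matrix_def)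
    fix i assume "i < dim_vec (k \<cdot>\<^sub>v v)"
    hence i: "i < ?n" using v by simp
    have r: "(?A *\<^sub>v v) $ i = S - v$i - (\<Sum>j\<in>{j. j < ?n \<and> U_graph p q i j}. v$j)"
      using row[OF v i] sumv by simp
    consider "i = 0" | "i = 1" | "i \<in> {2..p}" | "i = p+1" | "i = p+2" | "i = p+3"
            | "i \<in> {p+4..p+q}" | "i = p+q+1" using i by fastforce
    hence "(?A *\<^sub>v v) $ i = k * v$i"
    proof cases
      case 1 thus ?thesis using r nb0 sum_1p[of "\<lambda>j. v$j"] sb v0 v1 L(1) by (simp add: algebra_simps)
    next
      case 2 thus ?thesis using r nb1 v0 v1 vh L(3) p1 q3 by (simp add: algebra_simps)
    next
      case 3 thus ?thesis using r nbb[of i] vi wb v0 L(2) i by (simp add: algebra_simps)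
    next
      case 4 thus ?thesis using r nbd sum_d[of "\<lambda>j. v$j"] sg vd ve2 ve3 vh L(4) by (simp add: algebra_simps)
    next
      case 5 thus ?thesis using r nbe1 vd ve2 ve3 L(5) F0 q3 by (simp add: algebra_simps)
    next
      case 6 thus ?thesis using r nbe2 vd ve2 ve3 L(5) F0 q3 by (simp add: algebra_simps)
    next
      case 7 thus ?thesis using r nbg[of i] vi wg vd L(6) i by (simp add: algebra_simps)
    next
      case 8 thus ?thesis using r nbh v1 vd vh L(7) p1 by (simp add: algebra_simps)
    qed
    thus "(?A *\<^sub>v v) $ i = (k \<cdot>\<^sub>v v) $ i" using i v by simp
  qed
  have vnz: "v \<noteq> 0\<^sub>v ?n"
  proof
    assume v0': "v = 0\<^sub>v ?n"
    have "a = 0" using v0 v0' by simp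
    moreover have "S = 0" using sumv v0' by simp
    ultimately have "(k+1)*b = 0" using L(2) by simp
    hence "b = 0" using k by simp
    thus False using bneg[OF k] b_def by simp
  qed
  show ?thesis unfolding eigenvalue_def eigenvector_def
    using v vnz Av by (auto simp: adj_matrix_def)
qed

end

definition FP :: "real \<Rightarrow> real \<Rightarrow> real poly" where
  "FP P Q = [:(-8 + 2*P + 2*Q), (13 - 11*P - 7*Q + 4*P*Q), (20 - 6*Q - 4*P*Q),
     (-1 + 11*P + 7*Q - 7*P*Q), (-20 + 12*P + 12*Q - 2*P*Q), (-16 + 6*P + 6*Q), (-6 + P + Q), -1:]"

lemma FP_eq: "poly (FP (real p) (real q)) x = f_poly (int p) (int q) x"
  unfolding fp_eq FP_def by simp (Groebner_Basis.algebra)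

lemma f_m2: "f_poly (int p) (int q) (-2) = -10"
  unfolding fp_eq by (simp add: algebra_simps)

lemma lim_f: "filterlim (\<lambda>x. f_poly (int p) (int q) x) at_top at_bot"
  unfolding f_poly_def by simp real_asymp

lemma root_ex: "\<exists>r. r < -2 \<and> f_poly (int p) (int q) r = 0"
proof -
  have "eventually (\<lambda>x. 1 \<le> f_poly (int p) (int q) x) at_bot"
    using lim_f unfolding filterlim_at_top by blast
  then obtain N where N: "\<And>x. x \<le> N \<Longrightarrow> 1 \<le> f_poly (int p) (int q) x"
    unfolding eventually_at_bot_linorder by blast
  define x0 where "x0 = min N (-3)"
  have fx0: "0 \<le> f_poly (int p) (int q) x0" using N[of x0] by (simp add: x0_def)
  have cont: "\<forall>x. x0 \<le> x \<and> x \<le> -2 \<longrightarrow> isCont (f_poly (int p) (int q)) x"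
  proof (intro allI impI)
    fix x
    have "f_poly (int p) (int q) = poly (FP (real p) (real q))" using FP_eq by (intro ext) simp
    thus "isCont (f_poly (int p) (int q)) x" by simp
  qed
  obtain r where r: "x0 \<le> r" "r \<le> -2" "f_poly (int p) (int q) r = 0"
  proof -
    have "x0 \<le> -2" by (simp add: x0_def)
    thus ?thesis using IVT2[of "f_poly (int p) (int q)" "-2" 0 x0, OF _ fx0 _ cont] f_m2[of p q] that by auto
  qed
  moreover have "r \<noteq> -2" using r f_m2 by auto
  ultimately have "r < -2" by linarith
  thus ?thesis using r(3) by blast
qed

lemma fin_roots: "finite {x. f_poly (int p) (int q) x = 0}"
proof -
  have "FP (real p) (real q) \<noteq> 0"
  proof
    assume "FP (real p) (real q) = 0"
    hence "poly (FP (real p) (real q)) (-2) = 0" by simp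
    thus False using FP_eq f_m2 by simp
  qed
  hence "finite {x. poly (FP (real p) (real q)) x = 0}" by (rule poly_roots_finite)
  thus ?thesis using FP_eq by simp
qed

theorem mainTheorem7:
  fixes p q :: nat
  assumes "p \<ge> 1" and "q \<ge> 3"
  shows "f_poly (int p) (int q) (lambda_min (p + q + 2) (compl_graph (U_graph p q))) = 0
         \<and> (\<forall>x. f_poly (int p) (int q) x = 0 \<longrightarrow>
                lambda_min (p + q + 2) (compl_graph (U_graph p q)) \<le> x)
         \<and> f_poly (int p) (int q) (-2) = -10
         \<and> lambda_min (p + q + 2) (compl_graph (U_graph p q)) < -2"
proof -
  define R where "R = {x. f_poly (int p) (int q) x = 0}"
  define Ev where "Ev = {k. eigenvalue (adj_matrix (p+q+2) (compl_graph (U_graph p q))) k}"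
  have finR: "finite R" unfolding R_def by (rule fin_roots)
  obtain r0 where r0: "r0 < -2" "r0 \<in> R" using root_ex[of p q] unfolding R_def by auto
  define l where "l = Min R"
  have lR: "l \<in> R" unfolding l_def using finR r0 by (intro Min_in) auto
  have lmin: "\<And>x. x \<in> R \<Longrightarrow> l \<le> x" unfolding l_def using finR by simp
  have l2: "l < -2" using lmin[OF r0(2)] r0 by simp
  have Ev_sub: "Ev \<subseteq> insert (-1) (insert 0 R)"
    using dir2[OF assms] unfolding Ev_def R_def by blast
  have finEv: "finite Ev" using finite_subset[OF Ev_sub] finR by simp
  have lEv: "l \<in> Ev" unfolding Ev_def using dir1[OF assms, of l] lR l2 unfolding R_def by simp
  have Evl: "\<And>k. k \<in> Ev \<Longrightarrow> l \<le> k" using Ev_sub lmin l2 by force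
  have lm: "lambda_min (p + q + 2) (compl_graph (U_graph p q)) = l"
    unfolding lambda_min_def Ev_def[symmetric] using finEv Evl lEv by (intro Min_eqI) auto
  show ?thesis unfolding lm using lR lmin l2 f_m2 unfolding R_def by auto
qed

end
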